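(* Let $k\ge 0$ be an integer, let $G=(V,E)$ be a finite graph together with a finite family $\mathcal{C}$ of v-cliques such that $E$ consists exactly of the pairs of distinct nodes lying in a common member of $\mathcal{C}$. Let $G'$ be the graph obtained from $G$ by merging, for each $C\in\mathcal{C}$, all nodes that belong to $C$ and to no other member of $\mathcal{C}$ into a single node, and let $\pi:V\to V(G')$ be the merging map. Then for any two distinct nodes $u,v\in V$: $u$ and $v$ belong to the same $k$-core of $G$ if and only if they belong to the same $k$-core of $G'$.
   Context: A v-clique is a set of nodes inducing a complete subgraph. The merged graph $G'$ has node set $\pi(V)$, where $\pi$ identifies exactly those nodes whose set of containing v-cliques is a single common set $\{C\}$; two distinct nodes $x,y$ of $G'$ are adjacent iff some $u\in\pi^{-1}(x)$, $w\in\pi^{-1}(y)$ are adjacent in $G$. Each node $x$ of $G'$ is said to represent the $|\pi^{-1}(x)|$ nodes of $G$ mapped to it. A finite simple undirected graph $H$ is $k$-robust if, after removing arbitrary $k$ nodes and their incident edges, the remaining graph is still connected; a clique or a single node is $k$-robust for every $k$. A maximal $k$-robust partitioning of a graph $H$ is a partition of its node set into parts such that each node is in exactly one part, each part induces a $k$-robust subgraph, and the union of any two or more parts does not induce a $k$-robust subgraph. For a graph $H$, let $u\approx_H v$ mean that $u$ and $v$ lie in the same part in every maximal $k$-robust partitioning of $H$. In $G$, a $k$-core is an equivalence class of $\approx_G$ with at least $2$ nodes, and $u,v$ belong to the same $k$-core of $G$ iff they lie in a common such class. In $G'$, nodes are counted by the records they represent: a $k$-core of $G'$ is an equivalence class $X$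 of $\approx_{G'}$ with $|\pi^{-1}(X)|\ge 2$, and $u,v\in V$ belong to the same $k$-core of $G'$ iff $\pi(u),\pi(v)$ lie in a common such class (in particular this holds when $\pi(u)=\pi(v)$). *)

theory Defs
  imports Main
begin

text \<open>Graphs are given by a vertex set W and a symmetric irreflexive adjacency
  relation adj; induced subgraphs are given by vertex subsets.\<close>

definition is_clique :: "('v \<Rightarrow> 'v \<Rightarrow> bool) \<Rightarrow> 'v set \<Rightarrow> bool" where
  "is_clique adj S \<longleftrightarrow> (\<forall>x\<in>S. \<forall>y\<in>S. x \<noteq> y \<longrightarrow> adj x y)"

text \<open>The subgraph induced by T is connected (the empty graph counts as connected).\<close>
definition connected_on :: "('v \<Rightarrow> 'v \<Rightarrow> bool) \<Rightarrow> 'v set \<Rightarrow> bool" where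
  "connected_on adj T \<longleftrightarrow>
     (\<forall>x\<in>T. \<forall>y\<in>T. (\<lambda>a b. a \<in> T \<and> b \<in> T \<and> adj a b)\<^sup>*\<^sup>* x y)"

definition k_robust :: "('v \<Rightarrow> 'v \<Rightarrow> bool) \<Rightarrow> nat \<Rightarrow> 'v set \<Rightarrow> bool" where
  "k_robust adj k S \<longleftrightarrow>
     is_clique adj S \<or> (\<forall>R. R \<subseteq> S \<and> card R \<le> k \<longrightarrow> connected_on adj (S - R))"

definition max_robust_partitioning ::
    "('v \<Rightarrow> 'v \<Rightarrow> bool) \<Rightarrow> 'v set \<Rightarrow> nat \<Rightarrow> 'v set set \<Rightarrow> bool" where
  "max_robust_partitioning adj W k P \<longleftrightarrow>
     \<Union>P = W \<and> (\<forall>p\<in>P. p \<noteq> {}) \<and>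
     (\<forall>p\<in>P. \<forall>q\<in>P. p \<noteq> q \<longrightarrow> p \<inter> q = {}) \<and>
     (\<forall>p\<in>P. k_robust adj k p) \<and>
     (\<forall>Q. Q \<subseteq> P \<and> 2 \<le> card Q \<longrightarrow> \<not> k_robust adj k (\<Union>Q))"

definition robust_equiv :: "('v \<Rightarrow> 'v \<Rightarrow> bool) \<Rightarrow> 'v set \<Rightarrow> nat \<Rightarrow> 'v \<Rightarrow> 'v \<Rightarrow> bool" where
  "robust_equiv adj W k u v \<longleftrightarrow>
     u \<in> W \<and> v \<in> W \<and>
     (\<forall>P. max_robust_partitioning adj W k P \<longrightarrow> (\<exists>p\<in>P. u \<in> p \<and> v \<in> p))"

definition robust_class :: "('v \<Rightarrow> 'v \<Rightarrow> bool) \<Rightarrow> 'v set \<Rightarrow> nat \<Rightarrow> 'v \<Rightarrow> 'v set" where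
  "robust_class adj W k x = {z \<in> W. robust_equiv adj W k x z}"

definition clique_adj :: "'a set set \<Rightarrow> 'a \<Rightarrow> 'a \<Rightarrow> bool" where
  "clique_adj Cs u v \<longleftrightarrow> u \<noteq> v \<and> (\<exists>C\<in>Cs. u \<in> C \<and> v \<in> C)"

definition containing :: "'a set set \<Rightarrow> 'a \<Rightarrow> 'a set set" where
  "containing Cs u = {C \<in> Cs. u \<in> C}"

definition merge_map :: "'a set \<Rightarrow> 'a set set \<Rightarrow> 'a \<Rightarrow> 'a set" where
  "merge_map V Cs u =
     (if \<exists>C. containing Cs u = {C}
      then {w \<in> V. containing Cs w = containing Cs u} else {u})"

definition merged_adj :: "'a set \<Rightarrow> 'a set set \<Rightarrow> 'a set \<Rightarrow> 'a set \<Rightarrow> bool" where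
  "merged_adj V Cs x y \<longleftrightarrow> x \<noteq> y \<and>
     (\<exists>u\<in>V. \<exists>w\<in>V. merge_map V Cs u = x \<and> merge_map V Cs w = y \<and> clique_adj Cs u w)"

definition same_core_G :: "'a set \<Rightarrow> 'a set set \<Rightarrow> nat \<Rightarrow> 'a \<Rightarrow> 'a \<Rightarrow> bool" where
  "same_core_G V Cs k u v \<longleftrightarrow>
     (\<exists>x\<in>V. let X = robust_class (clique_adj Cs) V k x in
        2 \<le> card X \<and> u \<in> X \<and> v \<in> X)"

text \<open>u, v lie in a common k-core of G' (size counted by represented records).\<close>
definition same_core_merged :: "'a set \<Rightarrow> 'a set set \<Rightarrow> nat \<Rightarrow> 'a \<Rightarrow> 'a \<Rightarrow> bool" where
  "same_core_merged V Cs k u v \<longleftrightarrow>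
     (let \<pi> = merge_map V Cs; W = \<pi> ` V in
      \<exists>x\<in>W. let X = robust_class (merged_adj V Cs) W k x in
        2 \<le> card {w \<in> V. \<pi> w \<in> X} \<and> \<pi> u \<in> X \<and> \<pi> v \<in> X)"

end

theory Submission
  imports Defs
begin

lemma conn_union:
  assumes sym: "\<forall>a b. adj a b \<longrightarrow> adj b a"
    and cA: "connected_on adj A" and cB: "connected_on adj B"
    and link: "A = {} \<or> B = {} \<or> (\<exists>x\<in>A. \<exists>y\<in>B. adj x y)"
  shows "connected_on adj (A \<union> B)"
proof -
  let ?R = "\<lambda>a b. a \<in> A \<union> B \<and> b \<in> A \<union> B \<and> adj a b"
  have mA: "?R\<^sup>*\<^sup>* x y" if "x \<in> A" "y \<in> A" for x y
  proof -
    have "(\<lambda>a b. a \<in> A \<and> b \<in> A \<and> adj a b)\<^sup>*\<^sup>* x y" using cA that unfolding connected_on_def by blast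
    then show ?thesis by (rule rtranclp_mono[THEN predicate2D, rotated]) auto
  qed
  have mB: "?R\<^sup>*\<^sup>* x y" if "x \<in> B" "y \<in> B" for x y
  proof -
    have "(\<lambda>a b. a \<in> B \<and> b \<in> B \<and> adj a b)\<^sup>*\<^sup>* x y" using cB that unfolding connected_on_def by blast
    then show ?thesis by (rule rtranclp_mono[THEN predicate2D, rotated]) auto
  qed
  show ?thesis unfolding connected_on_def
  proof (intro ballI)
    fix x y assume x: "x \<in> A \<union> B" and y: "y \<in> A \<union> B"
    show "?R\<^sup>*\<^sup>* x y"
    proof (cases "(x \<in> A \<and> y \<in> A) \<or> (x \<in> B \<and> y \<in> B)")
      case True then show ?thesis using mA mB by blast
    next
      case False
      then have ne: "A \<noteq> {}" "B \<noteq> {}" using x y by auto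
      then obtain a b where ab: "a \<in> A" "b \<in> B" "adj a b" using link by blast
      have ba: "adj b a" using sym ab by blast
      show ?thesis
      proof (cases "x \<in> A")
        case True
        then have "y \<in> B" using False y by auto
        have "?R\<^sup>*\<^sup>* x a" using mA True ab by blast
        also have "?R a b" using ab by auto
        also have "?R\<^sup>*\<^sup>* b y" using mB ab \<open>y \<in> B\<close> by blast
        finally show ?thesis .
      next
        case xa: False
        then have xb: "x \<in> B" using x by auto
        then have "y \<in> A" using False y by auto
        have "?R\<^sup>*\<^sup>* x b" using mB xb ab by blast
        also have "?R b a" using ab ba by auto
        also have "?R\<^sup>*\<^sup>* a y" using mA ab \<open>y \<in> A\<close> by blast
        finally show ?thesis .
      qed
    qed
  qed
qed

lemma conn_remove_simplicial:
  assumes sym: "\<forall>a b. adj a b \<longrightarrow> adj b a"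
    and simp: "\<forall>z\<in>Z. \<forall>y y'. adj z y \<longrightarrow> adj z y' \<longrightarrow> y \<noteq> y' \<longrightarrow> adj y y'"
    and c: "connected_on adj T"
  shows "connected_on adj (T - Z)"
  unfolding connected_on_def
proof (intro ballI)
  fix x y assume x: "x \<in> T - Z" and y: "y \<in> T - Z"
  let ?R = "\<lambda>a b. a \<in> T \<and> b \<in> T \<and> adj a b"
  let ?S = "\<lambda>a b. a \<in> T - Z \<and> b \<in> T - Z \<and> adj a b"
  have p: "?R\<^sup>*\<^sup>* x y" using c x y unfolding connected_on_def by blast
  have "(y \<notin> Z \<longrightarrow> ?S\<^sup>*\<^sup>* x y) \<and> (y \<in> Z \<longrightarrow> (\<exists>y'. y' \<in> T - Z \<and> adj y y' \<and> ?S\<^sup>*\<^sup>* x y'))"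
    using p
  proof (induction rule: rtranclp_induct)
    case base then show ?case using x by auto
  next
    case (step y z)
    show ?case
    proof (cases "y \<in> Z")
      case False
      then have IH: "?S\<^sup>*\<^sup>* x y" using step by blast
      show ?thesis
      proof (cases "z \<in> Z")
        case True
        then show ?thesis using IH False step(2) sym by auto
      next
        case zZ: False
        have "?S y z" using step(2) False zZ by auto
        with IH have "?S\<^sup>*\<^sup>* x z" by (rule rtranclp.rtrancl_into_rtrancl)
        then show ?thesis using zZ by blast
      qed
    next
      case True
      then obtain y' where y': "y' \<in> T - Z" "adj y y'" "?S\<^sup>*\<^sup>* x y'" using step by blast
      have yz: "adj y z" using step(2) by auto
      show ?thesis
      proof (cases "z \<in> Z")
        case zZ: True
        have "y' \<noteq> z" using y' zZ by auto
        then have "adj y' z" using simp True y' yz by blast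
        then have "adj z y'" using sym by blast
        then show ?thesis using zZ y' by blast
      next
        case zZ: False
        show ?thesis
        proof (cases "z = y'")
          case True then show ?thesis using y' zZ by auto
        next
          case False
          then have "adj y' z" using simp \<open>y \<in> Z\<close> y' yz by blast
          then have "?S y' z" using y' zZ step(2) by auto
          with y'(3) have "?S\<^sup>*\<^sup>* x z" by (rule rtranclp.rtrancl_into_rtrancl)
          then show ?thesis using zZ by blast
        qed
      qed
    qed
  qed
  then show "?S\<^sup>*\<^sup>* x y" using y by blast
qed

lemma conn_path: "connected_on adj T \<Longrightarrow> x \<in> T \<Longrightarrow> y \<in> T \<Longrightarrow> (\<lambda>a b. a \<in> T \<and> b \<in> T \<and> adj a b)\<^sup>*\<^sup>* x y"
  unfolding connected_on_def by blast

lemma clique_conn: "is_clique adj S \<Longrightarrow> connected_on adj S"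
  unfolding connected_on_def is_clique_def
  by (metis (mono_tags, lifting) r_into_rtranclp rtranclp.rtrancl_refl)

lemma robust_remove:
  assumes "k_robust adj k p" "finite R" "card R \<le> k"
  shows "connected_on adj (p - R)"
proof (cases "is_clique adj p")
  case True
  then have "is_clique adj (p - R)" unfolding is_clique_def by blast
  then show ?thesis by (rule clique_conn)
next
  case False
  then have "\<forall>R. R \<subseteq> p \<and> card R \<le> k \<longrightarrow> connected_on adj (p - R)" using assms(1) unfolding k_robust_def by blast
  moreover have "card (R \<inter> p) \<le> k" using assms(2,3) by (meson card_mono inf_le1 le_trans)
  ultimately have "connected_on adj (p - (R \<inter> p))" by blast
  moreover have "p - (R \<inter> p) = p - R" by blast
  ultimately show ?thesis by simp
qed

locale ms =
  fixes V :: "'a set" and Cs :: "'a set set"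
  assumes finV: "finite V" and subV: "\<forall>C\<in>Cs. C \<subseteq> V"
begin

abbreviation "pi \<equiv> merge_map V Cs"

lemma pi_self: "u \<in> V \<Longrightarrow> u \<in> pi u"
  by (auto simp: merge_map_def)

lemma pi_eq:
  assumes "u \<in> V" "w \<in> V" "pi u = pi w"
  shows "u = w \<or> (\<exists>C. containing Cs u = {C} \<and> containing Cs w = {C})"
proof -
  have uw: "u \<in> pi w" using pi_self assms by auto
  have wu: "w \<in> pi u" using pi_self assms by auto
  show ?thesis
  proof (cases "\<exists>C. containing Cs u = {C}")
    case True
    show ?thesis
    proof (cases "\<exists>C. containing Cs w = {C}")
      case True
      then have "containing Cs u = containing Cs w" using uw by (simp add: merge_map_def)
      then show ?thesis using \<open>\<exists>C. containing Cs w = {C}\<close> by auto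
    next
      case False
      then show ?thesis using uw by (simp add: merge_map_def)
    qed
  next
    case False
    then show ?thesis using wu by (simp add: merge_map_def)
  qed
qed

lemma twin_C:
  assumes "containing Cs u = {C}"
  shows "C \<in> Cs" "u \<in> C" "\<And>E. E \<in> Cs \<Longrightarrow> u \<in> E \<Longrightarrow> E = C"
proof -
  have h: "{E\<in>Cs. u\<in>E} = {C}" using assms unfolding containing_def .
  have "C \<in> {E\<in>Cs. u\<in>E}" by (simp add: h)
  then show "C \<in> Cs" "u \<in> C" by auto
  fix E assume "E \<in> Cs" "u \<in> E"
  then have "E \<in> {E\<in>Cs. u\<in>E}" by simp
  then show "E = C" by (simp add: h)
qed

lemma twin_pi:
  assumes "u \<in> V" "w \<in> V" "containing Cs u = {C}" "containing Cs w = {C}"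
  shows "pi u = pi w"
  using assms by (simp add: merge_map_def)

lemma cadj_sym: "clique_adj Cs a b \<Longrightarrow> clique_adj Cs b a"
  by (auto simp: clique_adj_def)

lemma cadj_in: "clique_adj Cs a b \<Longrightarrow> a \<in> V \<and> b \<in> V"
  using subV by (auto simp: clique_adj_def)

lemma twin_adj:
  assumes "u \<in> V" "w \<in> V" "pi u = pi w" "u \<noteq> w"
  shows "clique_adj Cs u w"
proof -
  obtain C where "containing Cs u = {C}" "containing Cs w = {C}" using pi_eq[OF assms(1-3)] assms(4) by blast
  then have "C \<in> Cs" "u \<in> C" "w \<in> C" using twin_C(1,2) by metis+
  then show ?thesis using assms(4) unfolding clique_adj_def by blast
qed

lemma twin_nb:
  assumes "containing Cs s = {C}" "clique_adj Cs s b"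
  shows "b \<in> C"
proof -
  obtain E where E: "E \<in> Cs" "s \<in> E" "b \<in> E" using assms(2) unfolding clique_adj_def by blast
  have "E = C" by (rule twin_C(3)[OF assms(1) E(1,2)])
  then show ?thesis using E by simp
qed

lemma adj_transfer:
  assumes "clique_adj Cs s' t" "s \<in> V" "s' \<in> V" "pi s = pi s'" "s \<noteq> t"
  shows "clique_adj Cs s t"
proof (cases "s = s'")
  case True then show ?thesis using assms by simp
next
  case False
  then obtain C where C: "containing Cs s = {C}" "containing Cs s' = {C}" using pi_eq[OF assms(2,3,4)] by blast
  have "t \<in> C" by (rule twin_nb[OF C(2) assms(1)])
  moreover have "s \<in> C" "C \<in> Cs" using twin_C(1,2)[OF C(1)] by auto
  ultimately show ?thesis using assms(5) unfolding clique_adj_def by blast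
qed

lemma adj_lift:
  assumes "clique_adj Cs s' t'" "s \<in> V" "t \<in> V" "pi s = pi s'" "pi t = pi t'" "pi s \<noteq> pi t"
  shows "clique_adj Cs s t"
proof -
  have V': "s' \<in> V" "t' \<in> V" using cadj_in assms(1) by auto
  have "s \<noteq> t'" using assms by auto
  then have "clique_adj Cs s t'" using adj_transfer assms V' by blast
  then have "clique_adj Cs t' s" by (rule cadj_sym)
  moreover have "t \<noteq> s" using assms by auto
  ultimately have "clique_adj Cs t s" using adj_transfer[of t' s t] assms V' by simp
  then show ?thesis by (rule cadj_sym)
qed

lemma madj_iff:
  assumes "s \<in> V" "t \<in> V"
  shows "merged_adj V Cs (pi s) (pi t) \<longleftrightarrow> pi s \<noteq> pi t \<and> clique_adj Cs s t"
proof
  assume "merged_adj V Cs (pi s) (pi t)"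
  then obtain s' t' where st: "s' \<in> V" "t' \<in> V" "pi s' = pi s" "pi t' = pi t" "clique_adj Cs s' t'"
    "pi s \<noteq> pi t" unfolding merged_adj_def by blast
  have "clique_adj Cs s t" by (rule adj_lift[OF st(5) assms st(3)[symmetric] st(4)[symmetric] st(6)])
  then show "pi s \<noteq> pi t \<and> clique_adj Cs s t" using st(6) by simp
next
  assume "pi s \<noteq> pi t \<and> clique_adj Cs s t"
  then show "merged_adj V Cs (pi s) (pi t)" using assms unfolding merged_adj_def by blast
qed

lemma madj_W: "merged_adj V Cs X Y \<Longrightarrow> X \<in> pi ` V \<and> Y \<in> pi ` V"
  unfolding merged_adj_def by blast

lemma madj_sym: "\<forall>a b. merged_adj V Cs a b \<longrightarrow> merged_adj V Cs b a"
proof (intro allI impI)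
  fix a b assume "merged_adj V Cs a b"
  then obtain u w where uw: "a \<noteq> b" "u \<in> V" "w \<in> V" "pi u = a" "pi w = b" "clique_adj Cs u w"
    unfolding merged_adj_def by blast
  have "clique_adj Cs w u" using cadj_sym[OF uw(6)] .
  then show "merged_adj V Cs b a" unfolding merged_adj_def using uw by blast
qed

lemma cadj_sym': "\<forall>a b. clique_adj Cs a b \<longrightarrow> clique_adj Cs b a"
  using cadj_sym by blast

lemma simplicial:
  assumes "s \<in> V" "containing Cs s = {C}" "merged_adj V Cs (pi s) Y" "merged_adj V Cs (pi s) Y'" "Y \<noteq> Y'"
  shows "merged_adj V Cs Y Y'"
proof -
  have "Y \<in> pi ` V" "Y' \<in> pi ` V" using madj_W[OF assms(3)] madj_W[OF assms(4)] by simp_all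
  then obtain b b' where b: "b \<in> V" "Y = pi b" "b' \<in> V" "Y' = pi b'" by (auto simp del: merge_map_def)
  have "clique_adj Cs s b" "clique_adj Cs s b'" using madj_iff assms b by auto
  then have "b \<in> C" "b' \<in> C" using twin_nb[OF assms(2)] by auto
  moreover have "b \<noteq> b'" using b assms(5) by auto
  moreover have "C \<in> Cs" using twin_C(1)[OF assms(2)] .
  ultimately have "clique_adj Cs b b'" unfolding clique_adj_def by blast
  then show ?thesis using madj_iff b assms(5) by auto
qed

lemma conn_transfer:
  assumes T: "T \<subseteq> V"
  shows "connected_on (clique_adj Cs) T \<longleftrightarrow> connected_on (merged_adj V Cs) (pi ` T)"
proof
  assume c: "connected_on (clique_adj Cs) T"
  show "connected_on (merged_adj V Cs) (pi ` T)"
    unfolding connected_on_def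
  proof (intro ballI)
    fix X Y assume X: "X \<in> pi ` T" and Y: "Y \<in> pi ` T"
    obtain x where x: "x \<in> T" "X = pi x" using X by (auto simp del: merge_map_def)
    obtain y where y: "y \<in> T" "Y = pi y" using Y by (auto simp del: merge_map_def)
    let ?R = "\<lambda>a b. a \<in> pi ` T \<and> b \<in> pi ` T \<and> merged_adj V Cs a b"
    have "(\<lambda>a b. a \<in> T \<and> b \<in> T \<and> clique_adj Cs a b)\<^sup>*\<^sup>* x y" by (rule conn_path[OF c x(1) y(1)])
    then have "?R\<^sup>*\<^sup>* (pi x) (pi y)"
    proof (induction rule: rtranclp_induct)
      case base then show ?case by simp
    next
      case (step y z)
      from step(2) have yz: "y \<in> T" "z \<in> T" "clique_adj Cs y z" by simp_all
      show ?case
      proof (cases "pi y = pi z")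
        case True then show ?thesis using step(3) by simp
      next
        case False
        have "y \<in> V" "z \<in> V" using yz T by auto
        then have "merged_adj V Cs (pi y) (pi z)" using madj_iff False yz(3) by simp
        then have "?R (pi y) (pi z)" using yz by (simp del: merge_map_def)
        with step(3) show ?thesis by (rule rtranclp.rtrancl_into_rtrancl)
      qed
    qed
    then show "?R\<^sup>*\<^sup>* X Y" using x y by simp
  qed
next
  assume c: "connected_on (merged_adj V Cs) (pi ` T)"
  show "connected_on (clique_adj Cs) T"
    unfolding connected_on_def
  proof (intro ballI)
    fix x y assume x: "x \<in> T" and y: "y \<in> T"
    let ?R = "\<lambda>a b. a \<in> T \<and> b \<in> T \<and> clique_adj Cs a b"
    have "pi x \<in> pi ` T" "pi y \<in> pi ` T" using x y by simp_all
    from conn_path[OF c this]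
    have "(\<lambda>a b. a \<in> pi ` T \<and> b \<in> pi ` T \<and> merged_adj V Cs a b)\<^sup>*\<^sup>* (pi x) (pi y)" .
    then have "\<forall>z\<in>T. pi z = pi y \<longrightarrow> ?R\<^sup>*\<^sup>* x z"
    proof (induction rule: rtranclp_induct)
      case base
      show ?case
      proof (intro ballI impI)
        fix z assume z: "z \<in> T" "pi z = pi x"
        show "?R\<^sup>*\<^sup>* x z"
        proof (cases "x = z")
          case True then show ?thesis by simp
        next
          case False
          have "x \<in> V" "z \<in> V" using x z T by auto
          then have "clique_adj Cs x z" using twin_adj z(2)[symmetric] False by simp
          then show ?thesis using x z by (simp add: r_into_rtranclp)
        qed
      qed
    next
      case (step Y Z)
      show ?case
      proof (intro ballI impI)
        fix z assume z: "z \<in> T" "pi z = Z"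
        have Y: "Y \<in> pi ` T" and YZ: "merged_adj V Cs Y Z" using step(2) by simp_all
        obtain y' where y': "y' \<in> T" "pi y' = Y" using Y by (auto simp del: merge_map_def)
        have IH: "?R\<^sup>*\<^sup>* x y'" using step(3) y' by simp
        have "y' \<in> V" "z \<in> V" using y' z T by auto
        moreover have "merged_adj V Cs (pi y') (pi z)" using YZ y'(2) z(2) by simp
        ultimately have "clique_adj Cs y' z" using madj_iff by blast
        then have "?R y' z" using y' z by simp
        with IH show "?R\<^sup>*\<^sup>* x z" by (rule rtranclp.rtrancl_into_rtrancl)
      qed
    qed
    then show "?R\<^sup>*\<^sup>* x y" using y by simp
  qed
qed

end

context ms begin

lemma twin_robust:
  assumes r: "k_robust (clique_adj Cs) k p" and pV: "p \<subseteq> V" and a: "a \<in> p"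
    and Ca: "containing Cs a = {C}"
  shows "p \<subseteq> C \<or> k + 2 \<le> card (C \<inter> p)"
proof (rule ccontr)
  assume neg: "\<not> (p \<subseteq> C \<or> k + 2 \<le> card (C \<inter> p))"
  then obtain z where z: "z \<in> p" "z \<notin> C" by blast
  have aC: "a \<in> C" using twin_C(2)[OF Ca] .
  have ncl: "\<not> is_clique (clique_adj Cs) p"
  proof
    assume "is_clique (clique_adj Cs) p"
    moreover have "a \<noteq> z" using aC z by auto
    ultimately have "clique_adj Cs a z" using a z unfolding is_clique_def by blast
    then have "z \<in> C" by (rule twin_nb[OF Ca])
    then show False using z by simp
  qed
  then have all: "\<forall>R. R \<subseteq> p \<and> card R \<le> k \<longrightarrow> connected_on (clique_adj Cs) (p - R)"
    using r unfolding k_robust_def by blast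
  let ?R = "(C \<inter> p) - {a}"
  have "card ?R = card (C \<inter> p) - 1" using a aC by (simp add: card_Diff_singleton)
  moreover have "card (C \<inter> p) < k + 2" using neg by simp
  ultimately have "card ?R \<le> k" by linarith
  moreover have "?R \<subseteq> p" by blast
  ultimately have c: "connected_on (clique_adj Cs) (p - ?R)" using all[rule_format, of ?R] by simp
  have "a \<in> p - ?R" "z \<in> p - ?R" using a z by auto
  from conn_path[OF c this] have path: "(\<lambda>x y. x \<in> p - ?R \<and> y \<in> p - ?R \<and> clique_adj Cs x y)\<^sup>*\<^sup>* a z" .
  show False
    using path
  proof (cases rule: converse_rtranclpE)
    case base then show False using aC z by simp
  next
    case (step b)
    then have ab: "clique_adj Cs a b" and bp: "b \<in> p - ?R" by simp_all
    have "b \<in> C" using twin_nb[OF Ca ab] .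
    then have "b = a" using bp by blast
    then show False using ab by (simp add: clique_adj_def)
  qed
qed

lemma pick2:
  assumes "finite A" "2 \<le> card A" "B \<noteq> {}"
  shows "\<exists>x\<in>A. \<exists>y\<in>B. x \<noteq> y"
proof -
  obtain y where y: "y \<in> B" using assms(3) by blast
  have "card (A - {y}) \<ge> 1" using assms(2) card_Diff1_le[of A y] card_Diff_singleton_if[of A y] by (auto split: if_splits)
  then obtain x where "x \<in> A - {y}" by (metis card.empty ex_in_conv not_one_le_zero)
  then show ?thesis using y by blast
qed

lemma twin_part:
  assumes "p \<subseteq> C \<or> k + 2 \<le> card (C \<inter> p)" "p - R \<noteq> {}" "finite R" "card R \<le> k" "p \<subseteq> V"
  shows "C \<inter> p - R \<noteq> {} \<and> (\<not> p \<subseteq> C \<longrightarrow> 2 \<le> card (C \<inter> p - R))"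
proof (cases "p \<subseteq> C")
  case True
  then have "C \<inter> p - R = p - R" by blast
  then show ?thesis using True assms(2) by simp
next
  case False
  then have k2: "k + 2 \<le> card (C \<inter> p)" using assms(1) by blast
  have "card (C \<inter> p) - card R \<le> card (C \<inter> p - R)" using assms(3) by (rule diff_card_le_card_Diff)
  then have "2 \<le> card (C \<inter> p - R)" using k2 assms(4) by linarith
  moreover then have "C \<inter> p - R \<noteq> {}" by (metis card.empty not_numeral_le_zero)
  ultimately show ?thesis by blast
qed

lemma union_robust:
  assumes rp: "k_robust (clique_adj Cs) k p" and rq: "k_robust (clique_adj Cs) k q"
    and pV: "p \<subseteq> V" and qV: "q \<subseteq> V" and a: "a \<in> p" and b: "b \<in> q"
    and Ca: "containing Cs a = {C}" and Cb: "containing Cs b = {C}"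
  shows "k_robust (clique_adj Cs) k (p \<union> q)"
proof (cases "p \<subseteq> C \<and> q \<subseteq> C")
  case True
  have "C \<in> Cs" using twin_C(1)[OF Ca] .
  then have "is_clique (clique_adj Cs) (p \<union> q)" using True unfolding is_clique_def clique_adj_def by blast
  then show ?thesis unfolding k_robust_def by (rule disjI1)
next
  case False
  have CCs: "C \<in> Cs" using twin_C(1)[OF Ca] .
  have tp: "p \<subseteq> C \<or> k + 2 \<le> card (C \<inter> p)" by (rule twin_robust[OF rp pV a Ca])
  have tq: "q \<subseteq> C \<or> k + 2 \<le> card (C \<inter> q)" by (rule twin_robust[OF rq qV b Cb])
  have "\<forall>R. R \<subseteq> p \<union> q \<and> card R \<le> k \<longrightarrow> connected_on (clique_adj Cs) (p \<union> q - R)"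
  proof (intro allI impI)
    fix R assume R: "R \<subseteq> p \<union> q \<and> card R \<le> k"
    have "R \<subseteq> V" using R pV qV by blast
    then have fR: "finite R" using finV by (rule finite_subset)
    have Rk: "card R \<le> k" using R by simp
    have cp: "connected_on (clique_adj Cs) (p - R)" using robust_remove[OF rp fR Rk] .
    have cq: "connected_on (clique_adj Cs) (q - R)" using robust_remove[OF rq fR Rk] .
    have link: "p - R = {} \<or> q - R = {} \<or> (\<exists>x\<in>p - R. \<exists>y\<in>q - R. clique_adj Cs x y)"
    proof (cases "p - R = {} \<or> q - R = {}")
      case True then show ?thesis by blast
    next
      case ne: False
      have ne1: "p - R \<noteq> {}" and ne2: "q - R \<noteq> {}" using ne by auto
      have A: "C \<inter> p - R \<noteq> {} \<and> (\<not> p \<subseteq> C \<longrightarrow> 2 \<le> card (C \<inter> p - R))"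
        using twin_part[OF tp ne1 fR Rk pV] .
      have B: "C \<inter> q - R \<noteq> {} \<and> (\<not> q \<subseteq> C \<longrightarrow> 2 \<le> card (C \<inter> q - R))"
        using twin_part[OF tq ne2 fR Rk qV] .
      have "C \<inter> p - R \<subseteq> V" "C \<inter> q - R \<subseteq> V" using pV qV by auto
      then have fA: "finite (C \<inter> p - R)" "finite (C \<inter> q - R)" using finite_subset finV by auto
      have "\<exists>x\<in>C \<inter> p - R. \<exists>y\<in>C \<inter> q - R. x \<noteq> y"
      proof (cases "p \<subseteq> C")
        case False
        then have c2: "2 \<le> card (C \<inter> p - R)" using A by simp
        have Bne: "C \<inter> q - R \<noteq> {}" using B by (rule conjunct1)
        show ?thesis by (rule pick2[OF fA(1) c2 Bne])
      next
        case True
        then have "\<not> q \<subseteq> C" using \<open>\<not> (p \<subseteq> C \<and> q \<subseteq> C)\<close> by simp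
        then have c2: "2 \<le> card (C \<inter> q - R)" using B by simp
        have Ane: "C \<inter> p - R \<noteq> {}" using A by (rule conjunct1)
        obtain y x where xy: "y \<in> C \<inter> q - R" "x \<in> C \<inter> p - R" "y \<noteq> x"
          using pick2[OF fA(2) c2 Ane] by blast
        show ?thesis
        proof (rule bexI[of _ x])
          show "x \<in> C \<inter> p - R" by (rule xy(2))
          show "\<exists>y\<in>C \<inter> q - R. x \<noteq> y"
          proof (rule bexI[of _ y])
            show "x \<noteq> y" using xy(3) by simp
            show "y \<in> C \<inter> q - R" by (rule xy(1))
          qed
        qed
      qed
      then obtain x y where "x \<in> C \<inter> p - R" "y \<in> C \<inter> q - R" "x \<noteq> y" by blast
      then have "x \<in> p - R" "y \<in> q - R" "clique_adj Cs x y" using CCs unfolding clique_adj_def by auto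
      then show ?thesis by blast
    qed
    have "connected_on (clique_adj Cs) ((p - R) \<union> (q - R))"
      by (rule conn_union[OF cadj_sym' cp cq link])
    moreover have "(p - R) \<union> (q - R) = p \<union> q - R" by blast
    ultimately show "connected_on (clique_adj Cs) (p \<union> q - R)" by simp
  qed
  then show ?thesis unfolding k_robust_def by (rule disjI2)
qed

lemma sat:
  assumes P: "max_robust_partitioning (clique_adj Cs) V k P" and p: "p \<in> P" "a \<in> p"
    and b: "b \<in> V" "pi a = pi b"
  shows "b \<in> p"
proof (rule ccontr)
  assume nb: "b \<notin> p"
  have U: "\<Union>P = V" and disj: "\<forall>p\<in>P. \<forall>q\<in>P. p \<noteq> q \<longrightarrow> p \<inter> q = {}"
    and rob: "\<forall>p\<in>P. k_robust (clique_adj Cs) k p"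
    and mx: "\<forall>Q. Q \<subseteq> P \<and> 2 \<le> card Q \<longrightarrow> \<not> k_robust (clique_adj Cs) k (\<Union>Q)"
    using P unfolding max_robust_partitioning_def by blast+
  have aV: "a \<in> V" using U p by blast
  have "a \<noteq> b" using nb p by blast
  then obtain C where C: "containing Cs a = {C}" "containing Cs b = {C}" using pi_eq[OF aV b] by blast
  obtain q where q: "q \<in> P" "b \<in> q" using U b by blast
  have pq: "p \<noteq> q" using q nb by blast
  have "p \<subseteq> V" "q \<subseteq> V" using U p q by blast+
  moreover have "k_robust (clique_adj Cs) k p" "k_robust (clique_adj Cs) k q" using rob p q by blast+
  ultimately have "k_robust (clique_adj Cs) k (p \<union> q)"
    using union_robust[OF _ _ _ _ p(2) q(2) C] by blast
  moreover have "{p, q} \<subseteq> P" "2 \<le> card {p, q}" using p q pq by auto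
  ultimately show False using mx[rule_format, of "{p,q}"] by simp
qed

end

lemma mrp_facts:
  assumes "max_robust_partitioning adj W k P"
  shows "\<Union>P = W" "\<forall>p\<in>P. p \<noteq> {}" "\<forall>p\<in>P. \<forall>q\<in>P. p \<noteq> q \<longrightarrow> p \<inter> q = {}"
    "\<forall>p\<in>P. k_robust adj k p" "\<forall>Q. Q \<subseteq> P \<and> 2 \<le> card Q \<longrightarrow> \<not> k_robust adj k (\<Union>Q)"
  using assms unfolding max_robust_partitioning_def by simp_all

context ms begin

lemma clique_transfer:
  assumes SV: "S \<subseteq> V"
  shows "is_clique (clique_adj Cs) S \<longleftrightarrow> is_clique (merged_adj V Cs) (pi ` S)"
proof
  assume c: "is_clique (clique_adj Cs) S"
  show "is_clique (merged_adj V Cs) (pi ` S)" unfolding is_clique_def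
  proof (intro ballI impI)
    fix X Y assume X: "X \<in> pi ` S" and Y: "Y \<in> pi ` S" and XY: "X \<noteq> Y"
    obtain s where s: "s \<in> S" "X = pi s" using X by auto
    obtain t where t: "t \<in> S" "Y = pi t" using Y by auto
    have "s \<noteq> t" using s t XY by auto
    then have "clique_adj Cs s t" using c[unfolded is_clique_def, rule_format, OF s(1) t(1)] by simp
    moreover have "s \<in> V" "t \<in> V" using s t SV by auto
    ultimately show "merged_adj V Cs X Y" using madj_iff s(2) t(2) XY by simp
  qed
next
  assume c: "is_clique (merged_adj V Cs) (pi ` S)"
  show "is_clique (clique_adj Cs) S" unfolding is_clique_def
  proof (intro ballI impI)
    fix s t assume s: "s \<in> S" and t: "t \<in> S" and st: "s \<noteq> t"
    have V: "s \<in> V" "t \<in> V" using s t SV by auto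
    show "clique_adj Cs s t"
    proof (cases "pi s = pi t")
      case True then show ?thesis using twin_adj V st by simp
    next
      case False
      have ps: "pi s \<in> pi ` S" and pt: "pi t \<in> pi ` S" using s t by simp_all
      have "merged_adj V Cs (pi s) (pi t)" using c[unfolded is_clique_def, rule_format, OF ps pt False] .
      then show ?thesis using madj_iff V by simp
    qed
  qed
qed

lemma robust_transfer:
  assumes SV: "S \<subseteq> V" and sat: "\<forall>w\<in>V. pi w \<in> pi ` S \<longrightarrow> w \<in> S"
  shows "k_robust (clique_adj Cs) k S \<longleftrightarrow> k_robust (merged_adj V Cs) k (pi ` S)"
proof
  assume r: "k_robust (clique_adj Cs) k S"
  show "k_robust (merged_adj V Cs) k (pi ` S)"
  proof (cases "is_clique (clique_adj Cs) S")
    case True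
    then have "is_clique (merged_adj V Cs) (pi ` S)" using clique_transfer[OF SV] by simp
    then show ?thesis unfolding k_robust_def by (rule disjI1)
  next
    case False
    have all: "\<forall>R. R \<subseteq> S \<and> card R \<le> k \<longrightarrow> connected_on (clique_adj Cs) (S - R)"
      using r False unfolding k_robust_def by simp
    have "\<forall>R'. R' \<subseteq> pi ` S \<and> card R' \<le> k \<longrightarrow> connected_on (merged_adj V Cs) (pi ` S - R')"
    proof (intro allI impI)
      fix R' assume R': "R' \<subseteq> pi ` S \<and> card R' \<le> k"
      define rep where "rep X = (SOME w. w \<in> S \<and> pi w = X)" for X
      have rep: "rep X \<in> S \<and> pi (rep X) = X" if "X \<in> pi ` S" for X
      proof -
        from that have "\<exists>w. w \<in> S \<and> pi w = X" by auto
        then show ?thesis unfolding rep_def by (rule someI_ex)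
      qed
      let ?R = "rep ` R'"
      have RS: "?R \<subseteq> S" using rep R' by auto
      have "finite (pi ` S)" using finite_subset[OF SV finV] by simp
      then have fR': "finite R'" using R' finite_subset by auto
      have "card ?R \<le> card R'" using card_image_le[OF fR'] .
      then have Rk: "card ?R \<le> k" using R' by simp
      have c1: "connected_on (clique_adj Cs) (S - ?R)" using all[rule_format, of ?R] RS Rk by simp
      have SRV: "S - ?R \<subseteq> V" using SV by auto
      have c2: "connected_on (merged_adj V Cs) (pi ` (S - ?R))" using conn_transfer[OF SRV] c1 by simp
      let ?Z = "pi ` (S - ?R) \<inter> R'"
      have simpl: "\<forall>z\<in>?Z. \<forall>y y'. merged_adj V Cs z y \<longrightarrow> merged_adj V Cs z y' \<longrightarrow> y \<noteq> y' \<longrightarrow> merged_adj V Cs y y'"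
      proof (intro ballI allI impI)
        fix z y y' assume z: "z \<in> ?Z" and h: "merged_adj V Cs z y" "merged_adj V Cs z y'" "y \<noteq> y'"
        obtain s where s: "s \<in> S - ?R" "z = pi s" using z by auto
        have zR': "z \<in> R'" using z by simp
        have zS: "z \<in> pi ` S" using zR' R' by auto
        have r0: "rep z \<in> S" "pi (rep z) = z" using rep[OF zS] by auto
        have "rep z \<in> ?R" using zR' by simp
        then have ne: "s \<noteq> rep z" using s by auto
        have sV: "s \<in> V" and r0V: "rep z \<in> V" using s r0 SV by auto
        have "pi s = pi (rep z)" using s(2) r0(2) by simp
        then obtain C where C: "containing Cs s = {C}" using pi_eq[OF sV r0V] ne by blast
        show "merged_adj V Cs y y'" using simplicial[OF sV C] h s(2) by simp
      qed
      have c3: "connected_on (merged_adj V Cs) (pi ` (S - ?R) - ?Z)"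
        by (rule conn_remove_simplicial[OF madj_sym simpl c2])
      have eq: "pi ` (S - ?R) - ?Z = pi ` S - R'"
      proof
        show "pi ` (S - ?R) - ?Z \<subseteq> pi ` S - R'" by auto
        show "pi ` S - R' \<subseteq> pi ` (S - ?R) - ?Z"
        proof
          fix X assume X: "X \<in> pi ` S - R'"
          then obtain s where s: "s \<in> S" "X = pi s" by auto
          have "s \<notin> ?R"
          proof
            assume "s \<in> ?R"
            then obtain Y where Y: "Y \<in> R'" "s = rep Y" by auto
            then have "pi s = Y" using rep R' by auto
            then show False using X s Y by simp
          qed
          then show "X \<in> pi ` (S - ?R) - ?Z" using s X by auto
        qed
      qed
      show "connected_on (merged_adj V Cs) (pi ` S - R')" using c3 eq by simp
    qed
    then show ?thesis unfolding k_robust_def by (rule disjI2)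
  qed
next
  assume r: "k_robust (merged_adj V Cs) k (pi ` S)"
  show "k_robust (clique_adj Cs) k S"
  proof (cases "is_clique (merged_adj V Cs) (pi ` S)")
    case True
    then have "is_clique (clique_adj Cs) S" using clique_transfer[OF SV] by simp
    then show ?thesis unfolding k_robust_def by (rule disjI1)
  next
    case False
    have all: "\<forall>R'. R' \<subseteq> pi ` S \<and> card R' \<le> k \<longrightarrow> connected_on (merged_adj V Cs) (pi ` S - R')"
      using r False unfolding k_robust_def by simp
    have "\<forall>R. R \<subseteq> S \<and> card R \<le> k \<longrightarrow> connected_on (clique_adj Cs) (S - R)"
    proof (intro allI impI)
      fix R assume R: "R \<subseteq> S \<and> card R \<le> k"
      let ?R' = "{X \<in> pi ` S. \<forall>w\<in>V. pi w = X \<longrightarrow> w \<in> R}"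
      have sub: "?R' \<subseteq> pi ` R"
      proof
        fix X assume X: "X \<in> ?R'"
        then obtain s where s: "s \<in> S" "X = pi s" by auto
        have "s \<in> V" using s SV by auto
        moreover have "\<forall>w\<in>V. pi w = X \<longrightarrow> w \<in> R" using X by simp
        ultimately have "s \<in> R" using s(2) by simp
        then show "X \<in> pi ` R" using s by simp
      qed
      have "R \<subseteq> V" using R SV by auto
      then have fR: "finite R" using finV by (rule finite_subset)
      have "card ?R' \<le> card (pi ` R)" by (rule card_mono[OF finite_imageI[OF fR] sub])
      also have "\<dots> \<le> card R" by (rule card_image_le[OF fR])
      finally have Rk: "card ?R' \<le> k" using R by simp
      have "?R' \<subseteq> pi ` S" by blast
      then have c1: "connected_on (merged_adj V Cs) (pi ` S - ?R')" using all[rule_format, of ?R'] Rk by simp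
      have eq: "pi ` (S - R) = pi ` S - ?R'"
      proof
        show "pi ` (S - R) \<subseteq> pi ` S - ?R'"
        proof
          fix X assume "X \<in> pi ` (S - R)"
          then obtain s where s: "s \<in> S" "s \<notin> R" "X = pi s" by auto
          have "s \<in> V" using s SV by auto
          then show "X \<in> pi ` S - ?R'" using s by auto
        qed
        show "pi ` S - ?R' \<subseteq> pi ` (S - R)"
        proof
          fix X assume X: "X \<in> pi ` S - ?R'"
          then obtain w where w: "w \<in> V" "pi w = X" "w \<notin> R" by auto
          have "pi w \<in> pi ` S" using w(2) X by simp
          then have "w \<in> S" using sat w(1) by simp
          then show "X \<in> pi ` (S - R)" using w by auto
        qed
      qed
      have SRV: "S - R \<subseteq> V" using SV by auto
      show "connected_on (clique_adj Cs) (S - R)" using conn_transfer[OF SRV] c1 eq by simp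
    qed
    then show ?thesis unfolding k_robust_def by (rule disjI2)
  qed
qed

end

context ms begin

lemma part_fwd:
  assumes P: "max_robust_partitioning (clique_adj Cs) V k P"
  shows "max_robust_partitioning (merged_adj V Cs) (pi ` V) k ((\<lambda>p. pi ` p) ` P)"
proof -
  note F = mrp_facts[OF P]
  have pV: "p \<subseteq> V" if "p \<in> P" for p using F(1) that by blast
  have satP: "\<forall>w\<in>V. pi w \<in> pi ` p \<longrightarrow> w \<in> p" if p: "p \<in> P" for p
  proof (intro ballI impI)
    fix w assume w: "w \<in> V" "pi w \<in> pi ` p"
    then obtain a where a: "a \<in> p" "pi w = pi a" by auto
    show "w \<in> p" using sat[OF P p a(1) w(1) a(2)[symmetric]] .
  qed
  have inj: "inj_on (\<lambda>p. pi ` p) P"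
  proof (rule inj_onI)
    fix p q assume p: "p \<in> P" and q: "q \<in> P" and e: "pi ` p = pi ` q"
    have "p \<subseteq> q"
    proof
      fix a assume "a \<in> p"
      then have "pi a \<in> pi ` q" "a \<in> V" using e pV[OF p] by auto
      then show "a \<in> q" using satP[OF q] by simp
    qed
    moreover have "q \<subseteq> p"
    proof
      fix a assume "a \<in> q"
      then have "pi a \<in> pi ` p" "a \<in> V" using e pV[OF q] by auto
      then show "a \<in> p" using satP[OF p] by simp
    qed
    ultimately show "p = q" by simp
  qed
  have c1: "\<Union>((\<lambda>p. pi ` p) ` P) = pi ` V"
    using F(1) by (simp add: image_Union[symmetric])
  have c2: "\<forall>X\<in>(\<lambda>p. pi ` p) ` P. X \<noteq> {}" using F(2) by auto
  have c3: "\<forall>X\<in>(\<lambda>p. pi ` p) ` P. \<forall>Y\<in>(\<lambda>p. pi ` p) ` P. X \<noteq> Y \<longrightarrow> X \<inter> Y = {}"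
  proof (intro ballI impI)
    fix X Y assume X: "X \<in> (\<lambda>p. pi ` p) ` P" and Y: "Y \<in> (\<lambda>p. pi ` p) ` P" and XY: "X \<noteq> Y"
    obtain p where p: "p \<in> P" "X = pi ` p" using X by auto
    obtain q where q: "q \<in> P" "Y = pi ` q" using Y by auto
    have pq: "p \<noteq> q" using XY p q by auto
    show "X \<inter> Y = {}"
    proof (rule ccontr)
      assume "X \<inter> Y \<noteq> {}"
      then obtain Z where "Z \<in> X" "Z \<in> Y" by blast
      then obtain a b where ab: "a \<in> p" "b \<in> q" "pi a = pi b" using p q by auto
      have bV: "b \<in> V" using pV[OF q(1)] ab by auto
      have "pi b \<in> pi ` p" using ab by (metis imageI)
      then have "b \<in> p" using satP[OF p(1)] bV by simp
      then have "b \<in> p \<inter> q" using ab by simp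
      moreover have "p \<inter> q = {}" using F(3) p(1) q(1) pq by simp
      ultimately show False by simp
    qed
  qed
  have c4: "\<forall>X\<in>(\<lambda>p. pi ` p) ` P. k_robust (merged_adj V Cs) k X"
  proof
    fix X assume "X \<in> (\<lambda>p. pi ` p) ` P"
    then obtain p where p: "p \<in> P" "X = pi ` p" by auto
    have "k_robust (clique_adj Cs) k p" using F(4) p(1) by simp
    then show "k_robust (merged_adj V Cs) k X" using robust_transfer[OF pV[OF p(1)] satP[OF p(1)]] p(2) by simp
  qed
  have c5: "\<forall>Q'. Q' \<subseteq> (\<lambda>p. pi ` p) ` P \<and> 2 \<le> card Q' \<longrightarrow> \<not> k_robust (merged_adj V Cs) k (\<Union>Q')"
  proof (intro allI impI)
    fix Q' assume Q': "Q' \<subseteq> (\<lambda>p. pi ` p) ` P \<and> 2 \<le> card Q'"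
    define Q where "Q = {p \<in> P. pi ` p \<in> Q'}"
    have QP: "Q \<subseteq> P" unfolding Q_def by auto
    have QQ: "Q' = (\<lambda>p. pi ` p) ` Q" using Q' unfolding Q_def by auto
    have "inj_on (\<lambda>p. pi ` p) Q" using inj QP by (rule inj_on_subset)
    then have "card Q' = card Q" using QQ by (simp add: card_image)
    then have "2 \<le> card Q" using Q' by simp
    then have nr: "\<not> k_robust (clique_adj Cs) k (\<Union>Q)" using F(5) QP by simp
    have UV: "\<Union>Q \<subseteq> V" using QP pV by blast
    have Usat: "\<forall>w\<in>V. pi w \<in> pi ` \<Union>Q \<longrightarrow> w \<in> \<Union>Q"
    proof (intro ballI impI)
      fix w assume w: "w \<in> V" "pi w \<in> pi ` \<Union>Q"
      then obtain p a where pa: "p \<in> Q" "a \<in> p" "pi w = pi a" by auto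
      have "pi w \<in> pi ` p" using pa by simp
      then have "w \<in> p" using satP[of p] pa(1) QP w(1) by auto
      then show "w \<in> \<Union>Q" using pa(1) by auto
    qed
    have "pi ` \<Union>Q = \<Union>Q'" using QQ by (simp add: image_Union)
    then show "\<not> k_robust (merged_adj V Cs) k (\<Union>Q')" using robust_transfer[OF UV Usat] nr by simp
  qed
  show ?thesis unfolding max_robust_partitioning_def using c1 c2 c3 c4 c5 by blast
qed

lemma part_bwd:
  assumes P: "max_robust_partitioning (merged_adj V Cs) (pi ` V) k P'"
  shows "max_robust_partitioning (clique_adj Cs) V k ((\<lambda>X. {w \<in> V. pi w \<in> X}) ` P')"
proof -
  note F = mrp_facts[OF P]
  define pre where "pre X = {w \<in> V. pi w \<in> X}" for X
  have XW: "X \<subseteq> pi ` V" if "X \<in> P'" for X using F(1) that by blast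
  have pi_pre: "pi ` pre X = X" if "X \<subseteq> pi ` V" for X
    using that unfolding pre_def by auto
  have preV: "pre X \<subseteq> V" for X unfolding pre_def by auto
  have presat: "\<forall>w\<in>V. pi w \<in> pi ` pre X \<longrightarrow> w \<in> pre X" for X
    unfolding pre_def by auto
  have inj: "inj_on pre P'"
  proof (rule inj_onI)
    fix X Y assume "X \<in> P'" "Y \<in> P'" "pre X = pre Y"
    then show "X = Y" using pi_pre XW by metis
  qed
  have c1: "\<Union>(pre ` P') = V"
  proof
    show "\<Union>(pre ` P') \<subseteq> V" using preV by auto
    show "V \<subseteq> \<Union>(pre ` P')"
    proof
      fix w assume w: "w \<in> V"
      then have "pi w \<in> \<Union>P'" using F(1) by simp
      then obtain X where "X \<in> P'" "pi w \<in> X" by auto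
      then show "w \<in> \<Union>(pre ` P')" using w unfolding pre_def by auto
    qed
  qed
  have c2: "\<forall>p\<in>pre ` P'. p \<noteq> {}"
  proof
    fix p assume "p \<in> pre ` P'"
    then obtain X where X: "X \<in> P'" "p = pre X" by auto
    then have "X \<noteq> {}" using F(2) by simp
    then obtain x where "x \<in> X" by auto
    then obtain w where "w \<in> V" "pi w = x" using XW[OF X(1)] by auto
    then have "w \<in> p" using X \<open>x \<in> X\<close> unfolding pre_def by simp
    then show "p \<noteq> {}" by auto
  qed
  have c3: "\<forall>p\<in>pre ` P'. \<forall>q\<in>pre ` P'. p \<noteq> q \<longrightarrow> p \<inter> q = {}"
  proof (intro ballI impI)
    fix p q assume p: "p \<in> pre ` P'" and q: "q \<in> pre ` P'" and pq: "p \<noteq> q"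
    obtain X where X: "X \<in> P'" "p = pre X" using p by auto
    obtain Y where Y: "Y \<in> P'" "q = pre Y" using q by auto
    have "X \<noteq> Y" using pq X Y by auto
    then have "X \<inter> Y = {}" using F(3) X(1) Y(1) by simp
    then show "p \<inter> q = {}" using X(2) Y(2) unfolding pre_def by auto
  qed
  have c4: "\<forall>p\<in>pre ` P'. k_robust (clique_adj Cs) k p"
  proof
    fix p assume "p \<in> pre ` P'"
    then obtain X where X: "X \<in> P'" "p = pre X" by auto
    have "k_robust (merged_adj V Cs) k X" using F(4) X(1) by simp
    then have "k_robust (merged_adj V Cs) k (pi ` pre X)" using pi_pre[OF XW[OF X(1)]] by simp
    then show "k_robust (clique_adj Cs) k p" using robust_transfer[OF preV presat] X(2) by simp
  qed
  have c5: "\<forall>Q. Q \<subseteq> pre ` P' \<and> 2 \<le> card Q \<longrightarrow> \<not> k_robust (clique_adj Cs) k (\<Union>Q)"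
  proof (intro allI impI)
    fix Q assume Q: "Q \<subseteq> pre ` P' \<and> 2 \<le> card Q"
    define Q'' where "Q'' = {X \<in> P'. pre X \<in> Q}"
    have QP: "Q'' \<subseteq> P'" unfolding Q''_def by auto
    have QQ: "Q = pre ` Q''" using Q unfolding Q''_def by auto
    have "inj_on pre Q''" using inj QP by (rule inj_on_subset)
    then have "card Q = card Q''" using QQ by (simp add: card_image)
    then have "2 \<le> card Q''" using Q by simp
    then have nr: "\<not> k_robust (merged_adj V Cs) k (\<Union>Q'')" using F(5) QP by simp
    have UQ: "\<Union>Q = pre (\<Union>Q'')" using QQ unfolding pre_def by auto
    have "\<Union>Q'' \<subseteq> pi ` V" using QP XW by blast
    then have "pi ` \<Union>Q = \<Union>Q''" using UQ pi_pre by simp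
    then show "\<not> k_robust (clique_adj Cs) k (\<Union>Q)" using robust_transfer[OF preV presat] UQ nr by simp
  qed
  have "max_robust_partitioning (clique_adj Cs) V k (pre ` P')"
    unfolding max_robust_partitioning_def using c1 c2 c3 c4 c5 by blast
  then show ?thesis unfolding pre_def by simp
qed

end

context ms begin

lemma equiv_transfer:
  assumes a: "a \<in> V" and b: "b \<in> V"
  shows "robust_equiv (clique_adj Cs) V k a b \<longleftrightarrow> robust_equiv (merged_adj V Cs) (pi ` V) k (pi a) (pi b)"
proof
  assume e: "robust_equiv (clique_adj Cs) V k a b"
  have "\<forall>P'. max_robust_partitioning (merged_adj V Cs) (pi ` V) k P' \<longrightarrow> (\<exists>X\<in>P'. pi a \<in> X \<and> pi b \<in> X)"
  proof (intro allI impI)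
    fix P' assume P': "max_robust_partitioning (merged_adj V Cs) (pi ` V) k P'"
    have "max_robust_partitioning (clique_adj Cs) V k ((\<lambda>X. {w \<in> V. pi w \<in> X}) ` P')"
      by (rule part_bwd[OF P'])
    then obtain p where p: "p \<in> (\<lambda>X. {w \<in> V. pi w \<in> X}) ` P'" "a \<in> p" "b \<in> p"
      using e unfolding robust_equiv_def by blast
    then obtain X where X: "X \<in> P'" "p = {w \<in> V. pi w \<in> X}" by auto
    then have "pi a \<in> X" "pi b \<in> X" using p by auto
    then show "\<exists>X\<in>P'. pi a \<in> X \<and> pi b \<in> X" using X(1) by blast
  qed
  then show "robust_equiv (merged_adj V Cs) (pi ` V) k (pi a) (pi b)"
    unfolding robust_equiv_def using a b by simp
next
  assume e: "robust_equiv (merged_adj V Cs) (pi ` V) k (pi a) (pi b)"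
  have "\<forall>P. max_robust_partitioning (clique_adj Cs) V k P \<longrightarrow> (\<exists>p\<in>P. a \<in> p \<and> b \<in> p)"
  proof (intro allI impI)
    fix P assume P: "max_robust_partitioning (clique_adj Cs) V k P"
    have "max_robust_partitioning (merged_adj V Cs) (pi ` V) k ((\<lambda>p. pi ` p) ` P)"
      by (rule part_fwd[OF P])
    then obtain X where X: "X \<in> (\<lambda>p. pi ` p) ` P" "pi a \<in> X" "pi b \<in> X"
      using e unfolding robust_equiv_def by blast
    then obtain p where p: "p \<in> P" "X = pi ` p" by auto
    obtain a' where a': "a' \<in> p" "pi a' = pi a" using X(2) p(2) by auto
    obtain b' where b': "b' \<in> p" "pi b' = pi b" using X(3) p(2) by auto
    have "a \<in> p" by (rule sat[OF P p(1) a'(1) a a'(2)])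
    moreover have "b \<in> p" by (rule sat[OF P p(1) b'(1) b b'(2)])
    ultimately show "\<exists>p\<in>P. a \<in> p \<and> b \<in> p" using p(1) by blast
  qed
  then show "robust_equiv (clique_adj Cs) V k a b"
    unfolding robust_equiv_def using a b by simp
qed

lemma class_transfer:
  assumes x: "x \<in> V"
  shows "robust_class (clique_adj Cs) V k x = {w \<in> V. pi w \<in> robust_class (merged_adj V Cs) (pi ` V) k (pi x)}"
  using equiv_transfer[OF x] x unfolding robust_class_def by auto

lemma main:
  assumes u: "u \<in> V" and v: "v \<in> V"
  shows "same_core_G V Cs k u v \<longleftrightarrow> same_core_merged V Cs k u v"
proof -
  let ?c = "\<lambda>x. robust_class (merged_adj V Cs) (pi ` V) k x"
  have memb: "z \<in> robust_class (clique_adj Cs) V k x \<longleftrightarrow> pi z \<in> ?c (pi x)" if "x \<in> V" "z \<in> V" for x z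
    using class_transfer[OF that(1)] that(2) by simp
  have "same_core_G V Cs k u v \<longleftrightarrow>
    (\<exists>x\<in>V. 2 \<le> card {w \<in> V. pi w \<in> ?c (pi x)} \<and> pi u \<in> ?c (pi x) \<and> pi v \<in> ?c (pi x))"
    unfolding same_core_G_def Let_def using class_transfer memb u v by simp
  also have "\<dots> \<longleftrightarrow> (\<exists>y\<in>pi ` V. 2 \<le> card {w \<in> V. pi w \<in> ?c y} \<and> pi u \<in> ?c y \<and> pi v \<in> ?c y)"
    by blast
  also have "\<dots> \<longleftrightarrow> same_core_merged V Cs k u v"
    unfolding same_core_merged_def Let_def by simp
  finally show ?thesis .
qed

end

theorem theorem1:
  fixes V :: "'a set" and Cs :: "'a set set" and k :: nat and u v :: 'a
  assumes "finite V" and "finite Cs" and "\<forall>C\<in>Cs. C \<subseteq> V"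
    and "u \<in> V" and "v \<in> V" and "u \<noteq> v"
  shows "same_core_G V Cs k u v \<longleftrightarrow> same_core_merged V Cs k u v"
proof -
  interpret ms V Cs using assms(1,3) by unfold_locales
  show ?thesis using main[OF assms(4,5)] .
qed

end
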